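(* Let $G$ and $H$ be impartial games that are both $\mathcal{P}$-positions. Then the split sum $G \circ H$ is a $\mathcal{P}$-position.
   Context: All games are finite (short) impartial games under normal play (a player with no legal move loses). A game is identified with its set of options, written $\{g_1,\dots,g_k\}$; $\mathbf{E}$ denotes the game with no options. Two games are identical, $G\equiv H$, if they have the same set of options, recursively. A $\mathcal{P}$-position is a game whose options are all $\mathcal{N}$-positions (in particular $\mathbf{E}$ is a $\mathcal{P}$-position); an $\mathcal{N}$-position is a game having at least one option that is a $\mathcal{P}$-position. The split sum is defined recursively by: $G\circ H \equiv \mathbf{E}$ if $G\equiv \mathbf{E}$; $G\circ H\equiv G$ if $H\equiv\mathbf{E}$ (and $G\not\equiv\mathbf{E}$); otherwise $G\circ H \equiv \{G\circ h,\ g\circ H\}$ where $g$ ranges over the options of $G$ and $h$ over the options of $H$. *)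

theory Defs
  imports Main "HOL-Library.FSet"
begin

text \<open>A finite impartial game is identified with its finite set of options,
  recursively; equality of this datatype is exactly recursive identity.\<close>
datatype game = Game (opts: "game fset")

definition E :: game where "E = Game {||}"

lemma size_opt_less: "g |\<in>| opts G \<Longrightarrow> size g < size G"
proof (cases G)
  case (Game S)
  assume "g |\<in>| opts G"
  then have g: "g \<in> fset S" using Game by simp
  have "size g < Suc (size g)" by simp
  also have "\<dots> \<le> (\<Sum>x\<in>fset S. Suc (size x))"
    by (rule member_le_sum[OF g]) auto
  finally show ?thesis using Game by simp
qed

function isP :: "game \<Rightarrow> bool" and isN :: "game \<Rightarrow> bool" where
  "isP G = (\<forall>g\<in>fset (opts G). isN g)"
| "isN G = (\<exists>g\<in>fset (opts G). isP g)"
  by pat_completeness auto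
termination
  by (relation "measure (\<lambda>x. case x of Inl G \<Rightarrow> size G | Inr G \<Rightarrow> size G)")
     (auto dest: size_opt_less)

function ssum :: "game \<Rightarrow> game \<Rightarrow> game" (infixl "\<circ>\<^sub>s" 70) where
  "ssum G H =
     (if G = E then E
      else if H = E then G
      else Game ((\<lambda>h. ssum G h) |`| opts H |\<union>| (\<lambda>g. ssum g H) |`| opts G))"
  by pat_completeness auto
termination
  by (relation "measure (\<lambda>(G, H). size G + size H)") (auto dest: size_opt_less)

declare isP.simps[simp del] isN.simps[simp del] ssum.simps[simp del]

end

theory Submission
  imports Defs
begin

lemma isN_iff: "isN G = (\<not> isP G)"
proof (induction "size G" arbitrary: G rule: less_induct)
  case less
  have "\<And>g. g \<in> fset (opts G) \<Longrightarrow> isN g = (\<not> isP g)"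
    using less size_opt_less by auto
  then show ?case by (auto simp: isP.simps[of G] isN.simps[of G])
qed

lemma isP_E: "isP E" by (simp add: E_def isP.simps)

lemma opts_E: "G \<noteq> E \<Longrightarrow> opts G \<noteq> {||}"
  by (cases G) (auto simp: E_def)

lemma main: "G \<noteq> E \<Longrightarrow> (isP G \<and> isP H \<longrightarrow> isP (G \<circ>\<^sub>s H)) \<and> (isP G \<noteq> isP H \<longrightarrow> \<not> isP (G \<circ>\<^sub>s H))"
proof (induction "size G + size H" arbitrary: G H rule: less_induct)
  case less
  show ?case
  proof (cases "H = E")
    case True
    have "G \<circ>\<^sub>s E = G" using less.prems by (subst ssum.simps) simp
    then show ?thesis using True by (simp add: isP_E)
  next
    case HE: False
    have eq: "G \<circ>\<^sub>s H = Game ((\<lambda>h. G \<circ>\<^sub>s h) |`| opts H |\<union>| (\<lambda>g. g \<circ>\<^sub>s H) |`| opts G)"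
      using less.prems HE by (simp add: ssum.simps[of G H])
    have IH1: "\<And>h. h |\<in>| opts H \<Longrightarrow> (isP G \<and> isP h \<longrightarrow> isP (G \<circ>\<^sub>s h)) \<and> (isP G \<noteq> isP h \<longrightarrow> \<not> isP (G \<circ>\<^sub>s h))"
    proof -
      fix h assume "h |\<in>| opts H"
      then have "size G + size h < size G + size H" using size_opt_less by simp
      then show "?thesis h" using less.hyps less.prems by blast
    qed
    have IH2: "\<And>g. g |\<in>| opts G \<Longrightarrow> g \<noteq> E \<Longrightarrow> (isP g \<and> isP H \<longrightarrow> isP (g \<circ>\<^sub>s H)) \<and> (isP g \<noteq> isP H \<longrightarrow> \<not> isP (g \<circ>\<^sub>s H))"
    proof -
      fix g assume "g |\<in>| opts G" "g \<noteq> E"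
      then have "size g + size H < size G + size H" using size_opt_less by simp
      then show "?thesis g" using less.hyps \<open>g \<noteq> E\<close> by blast
    qed
    have EH: "E \<circ>\<^sub>s H = E" by (subst ssum.simps) simp
    have GE: "G \<circ>\<^sub>s E = G" using less.prems by (subst ssum.simps) simp
    have PE: "isP (G \<circ>\<^sub>s H) = ((\<forall>h. h |\<in>| opts H \<longrightarrow> \<not> isP (G \<circ>\<^sub>s h)) \<and> (\<forall>g. g |\<in>| opts G \<longrightarrow> \<not> isP (g \<circ>\<^sub>s H)))"
      by (auto simp: eq isP.simps[of "Game _"] isN_iff)
    have oG: "isP G = (\<forall>g. g |\<in>| opts G \<longrightarrow> \<not> isP g)" by (auto simp: isP.simps[of G] isN_iff)
    have oH: "isP H = (\<forall>h. h |\<in>| opts H \<longrightarrow> \<not> isP h)" by (auto simp: isP.simps[of H] isN_iff)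
    have c1: "isP G \<and> isP H \<longrightarrow> isP (G \<circ>\<^sub>s H)"
    proof
      assume B: "isP G \<and> isP H"
      have "\<forall>h. h |\<in>| opts H \<longrightarrow> \<not> isP (G \<circ>\<^sub>s h)"
        using B oH IH1 by metis
      moreover have "\<forall>g. g |\<in>| opts G \<longrightarrow> \<not> isP (g \<circ>\<^sub>s H)"
        using B oG IH2 isP_E by metis
      ultimately show "isP (G \<circ>\<^sub>s H)" using PE by simp
    qed
    have c2: "isP G \<and> \<not> isP H \<longrightarrow> \<not> isP (G \<circ>\<^sub>s H)"
    proof
      assume B: "isP G \<and> \<not> isP H"
      then obtain h where h: "h |\<in>| opts H" "isP h" using oH by auto
      have "isP (G \<circ>\<^sub>s h)"
      proof (cases "h = E")
        case True then show ?thesis using GE B by simp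
      next
        case False then show ?thesis using IH1[OF h(1)] B h by simp
      qed
      then show "\<not> isP (G \<circ>\<^sub>s H)" using PE h by auto
    qed
    have c3: "\<not> isP G \<and> isP H \<longrightarrow> \<not> isP (G \<circ>\<^sub>s H)"
    proof
      assume B: "\<not> isP G \<and> isP H"
      then obtain g where g: "g |\<in>| opts G" "isP g" using oG by auto
      have "isP (g \<circ>\<^sub>s H)"
      proof (cases "g = E")
        case True then show ?thesis using EH isP_E by simp
      next
        case False then show ?thesis using IH2[OF g(1) False] B g by simp
      qed
      then show "\<not> isP (G \<circ>\<^sub>s H)" using PE g by auto
    qed
    show ?thesis using c1 c2 c3 by blast
  qed
qed

theorem theorem2p2:
  fixes G H :: game
  assumes "isP G" and "isP H"
  shows "isP (G \<circ>\<^sub>s H)"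
proof (cases "G = E")
  case True
  then show ?thesis by (subst ssum.simps) (simp add: isP_E)
next
  case False
  then show ?thesis using main assms by simp
qed

end
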